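(* For the renormalized $\phi^4$-trajectory (the unique solution of system (S) with properties (I)–(VII), for any choice of the sequence $(\lambda^{(r)})_{r\ge2}$), the second-order six-point vertex is $$\widetilde V^{(2)}_6(p_1,\ldots,p_5)=-20\left[\frac{1-e^{-(p_1+p_2+p_3)^2}}{(p_1+p_2+p_3)^2}\right]_{S_5},$$ so that $\widetilde V_6^{(2)}(0,0,0,q,-q)=-8-12\,\frac{1-e^{-q^2}}{q^2}$, and the second-order coefficient of the $\beta$-function is $\beta^{(2)}=-\frac{6}{(4\pi)^2}$.
   Context: Here $[F]_{S_5}$ is the average of $F$ over all permutations of $p_1,\ldots,p_5\in\mathbb R^4$, and $\frac{1-e^{-x}}{x}$ is understood as $1$ at $x=0$. Notation: $\widetilde C(q)=e^{-q^2}$; $\int\frac{d^4q}{(2\pi)^4}$ is Lebesgue measure on $\mathbb R^4$ divided by $(2\pi)^4$; vertices $\widetilde V^{(r)}_{2n}$ are functions of $p_1,\ldots,p_{2n-1}\in\mathbb R^4$, with $p_{2n}=-\sum_{i<2n}p_i$; $[\cdot]_{S_{k}}$ denotes averaging over permutations of $p_1,\ldots,p_k$; $\lambda^{(1)}=1$. System (S): for all $r,n\ge1$, $\{\sum_{i=1}^{2n-1}p_i\cdot\nabla_{p_i}-4+2n+r\beta^{(1)}\}\widetilde V^{(r)}_{2n}(p_1,\ldots,p_{2n-1})=-\sum_{s=2}^r\binom rs\beta^{(s)}\widetilde V^{(r-s+1)}_{2n}(p_1,\ldots,p_{2n-1})+\int\frac{d^4q}{(2\pi)^4}\widetilde C(q)\widetilde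 V^{(r)}_{2(n+1)}(p_1,\ldots,p_{2n-1},q,-q)-\sum_{s=1}^{r-1}\binom rs\sum_{m=1}^n\binom{2n}{2m-1}\big[\widetilde C(\sum_{i=1}^{2m-1}p_i)\widetilde V^{(s)}_{2m}(p_1,\ldots,p_{2m-1})\widetilde V^{(r-s)}_{2(n-m+1)}(p_{2m},\ldots,p_{2n-1},\sum_{i=1}^{2m-1}p_i)\big]_{S_{2n-1}}$. Properties: (I) symmetry under permutations of $(p_1,\ldots,p_{2n})$; (II) $O(4)$-invariance; (III) $C^\infty$; (IV) for all $0<\epsilon<1/2$ and multi-indices $\alpha$, $\sup_p|\partial^\alpha\widetilde V^{(r)}_{2n}(p)|e^{-\epsilon\sum_{i=1}^{2n-1}p_i^2}<\infty$; (V) $\widetilde V^{(r)}_{2n}\equiv0$ for $n>r+1$; (VI) $\widetilde V^{(r)}_4(0,0,0)=\lambda^{(r)}$ for $r>1$; (VII) $\widetilde V^{(1)}_2(p)=\mu^{(1)}+\zeta^{(1)}p^2$ for some reals $\mu^{(1)},\zeta^{(1)}$, $\widetilde V^{(1)}_4\equiv1$, $\widetilde V^{(1)}_{2n}\equiv0$ for $n>2$. *)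

theory Defs
  imports "HOL-Analysis.Analysis" "HOL-Combinatorics.Permutations"
begin

text \<open>Momenta are elements of real^4.  A vertex function of p_1,...,p_(k) is represented
  as a function (nat => real^4) => real that only depends on the entries 0..k-1
  (entry i-1 stores p_i).  The vertex V^(r)_(2n) is represented by V r n.\<close>

type_synonym mom = "real^4"
type_synonym vfun = "(nat \<Rightarrow> mom) \<Rightarrow> real"

definition depends_only :: "nat \<Rightarrow> vfun \<Rightarrow> bool" where
  "depends_only k f \<longleftrightarrow> (\<forall>p q. (\<forall>i<k. p i = q i) \<longrightarrow> f p = f q)"

definition pd :: "vfun \<Rightarrow> nat \<Rightarrow> 4 \<Rightarrow> vfun" where
  "pd f i j p = deriv (\<lambda>t. f (p(i := p i + t *\<^sub>R axis j 1))) 0"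

fun pdl :: "(nat \<times> 4) list \<Rightarrow> vfun \<Rightarrow> vfun" where
  "pdl [] f = f"
| "pdl ((i, j) # ds) f = pd (pdl ds f) i j"

definition dirs_below :: "nat \<Rightarrow> (nat \<times> 4) list \<Rightarrow> bool" where
  "dirs_below k ds \<longleftrightarrow> (\<forall>d\<in>set ds. fst d < k)"

definition smooth_in :: "nat \<Rightarrow> vfun \<Rightarrow> bool" where
  "smooth_in k f \<longleftrightarrow>
     (\<forall>ds. dirs_below k ds \<longrightarrow>
        continuous_on {p. \<forall>i\<ge>k. p i = 0} (pdl ds f) \<and>
        (\<forall>i j p. i < k \<longrightarrow> (\<lambda>t. pdl ds f (p(i := p i + t *\<^sub>R axis j 1))) differentiable (at 0)))"

definition euler :: "nat \<Rightarrow> vfun \<Rightarrow> vfun" where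
  "euler k f p = (\<Sum>i<k. \<Sum>j\<in>(UNIV::4 set). (p i $ j) * pd f i j p)"

definition avg :: "nat \<Rightarrow> vfun \<Rightarrow> vfun" where
  "avg k F p = (\<Sum>\<sigma>\<in>{\<sigma>. \<sigma> permutes {..<k}}. F (p \<circ> \<sigma>)) / fact k"

definition Cov :: "mom \<Rightarrow> real" where
  "Cov q = exp (- (q \<bullet> q))"

definition g :: "mom \<Rightarrow> real" where
  "g q = (if q \<bullet> q = 0 then 1 else (1 - exp (- (q \<bullet> q))) / (q \<bullet> q))"

definition ext_mom :: "nat \<Rightarrow> (nat \<Rightarrow> mom) \<Rightarrow> (nat \<Rightarrow> mom)" where
  "ext_mom n p = (\<lambda>i. if i < 2*n - 1 then p i
                       else if i = 2*n - 1 then - (\<Sum>l<2*n - 1. p l) else 0)"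

definition flow_rhs :: "(nat \<Rightarrow> nat \<Rightarrow> vfun) \<Rightarrow> (nat \<Rightarrow> real) \<Rightarrow> nat \<Rightarrow> nat \<Rightarrow> vfun" where
  "flow_rhs V beta r n p =
     - (\<Sum>s=2..r. real (r choose s) * beta s * V (r - s + 1) n p)
     + (integral\<^sup>L lborel (\<lambda>q::mom. Cov q *
          V r (n+1) (\<lambda>i. if i < 2*n - 1 then p i else if i = 2*n - 1 then q
                         else if i = 2*n then - q else 0))) / (2*pi)^4
     - (\<Sum>s=1..r-1. real (r choose s) * (\<Sum>m=1..n. real ((2*n) choose (2*m - 1)) *
          avg (2*n - 1) (\<lambda>p. Cov (\<Sum>i<2*m - 1. p i) * V s m p *
              V (r - s) (n - m + 1) (\<lambda>i. if i < 2*n - 2*m then p (2*m - 1 + i)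
                                     else if i = 2*n - 2*m then (\<Sum>l<2*m - 1. p l) else 0)) p))"

definition system_S :: "(nat \<Rightarrow> nat \<Rightarrow> vfun) \<Rightarrow> (nat \<Rightarrow> real) \<Rightarrow> bool" where
  "system_S V beta \<longleftrightarrow>
    (\<forall>r n p. r \<ge> 1 \<longrightarrow> n \<ge> 1 \<longrightarrow>
       euler (2*n - 1) (V r n) p + (- 4 + 2 * real n + real r * beta 1) * V r n p
       = flow_rhs V beta r n p)"

definition props_I_VII :: "(nat \<Rightarrow> nat \<Rightarrow> vfun) \<Rightarrow> (nat \<Rightarrow> real) \<Rightarrow> bool" where
  "props_I_VII V lam \<longleftrightarrow>
    (\<forall>r n. r \<ge> 1 \<longrightarrow> n \<ge> 1 \<longrightarrow>
       depends_only (2*n - 1) (V r n)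
     \<and> (\<forall>\<sigma> p. \<sigma> permutes {..<2*n} \<longrightarrow> V r n (ext_mom n p \<circ> \<sigma>) = V r n p)
     \<and> (\<forall>R p. orthogonal_transformation R \<longrightarrow> V r n (\<lambda>i. R (p i)) = V r n p)
     \<and> smooth_in (2*n - 1) (V r n)
     \<and> (\<forall>\<epsilon> ds. 0 < \<epsilon> \<longrightarrow> \<epsilon> < 1/2 \<longrightarrow> dirs_below (2*n - 1) ds \<longrightarrow>
          (\<exists>M. \<forall>p. \<bar>pdl ds (V r n) p\<bar> * exp (- \<epsilon> * (\<Sum>i<2*n - 1. p i \<bullet> p i)) \<le> M))
     \<and> (n > r + 1 \<longrightarrow> (\<forall>p. V r n p = 0)))
   \<and> (\<forall>r. r > 1 \<longrightarrow> V r 2 (\<lambda>_. 0) = lam r)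
   \<and> (\<exists>mu zeta. \<forall>p. V 1 1 p = mu + zeta * (p 0 \<bullet> p 0))
   \<and> (\<forall>p. V 1 2 p = 1)
   \<and> (\<forall>n p. n > 2 \<longrightarrow> V 1 n p = 0)"

end

theory Submission
  imports Defs "HOL-Probability.Probability"
begin


definition Sk :: "nat \<Rightarrow> (nat \<Rightarrow> mom) set" where
  "Sk k = {p. \<forall>i\<ge>k. p i = 0}"

definition pth :: "(nat \<Rightarrow> mom) \<Rightarrow> (nat \<Rightarrow> mom) \<Rightarrow> (nat \<times> 4) set \<Rightarrow> real \<Rightarrow> (nat \<Rightarrow> mom)" where
  "pth q v A x = (\<lambda>i. q i + (\<chi> j. if (i,j) \<in> A then x * v i $ j else 0))"

lemma partial_deriv_at:
  fixes f :: vfun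
  assumes "\<And>p. (\<lambda>t. f (p(i := p i + t *\<^sub>R axis j 1))) differentiable (at 0)"
  shows "((\<lambda>s. f (p(i := p i + s *\<^sub>R axis j 1))) has_real_derivative
           pd f i j (p(i := p i + s0 *\<^sub>R axis j 1))) (at s0)"
proof -
  define p' where "p' = p(i := p i + s0 *\<^sub>R axis j 1)"
  have d: "((\<lambda>t. f (p'(i := p' i + t *\<^sub>R axis j 1))) has_real_derivative pd f i j p') (at 0)"
    unfolding pd_def using assms[of p'] DERIV_deriv_iff_real_differentiable by blast
  have e: "(\<lambda>s. f (p(i := p i + s *\<^sub>R axis j 1))) = (\<lambda>s. (\<lambda>t. f (p'(i := p' i + t *\<^sub>R axis j 1))) (s - s0))"
    by (auto simp: p'_def fun_eq_iff algebra_simps scaleR_diff_left)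
  have "((\<lambda>s. s - s0) has_real_derivative 1) (at s0)"
    by (auto intro!: derivative_eq_intros)
  from DERIV_chain2[OF _ this, of "(\<lambda>t. f (p'(i := p' i + t *\<^sub>R axis j 1)))"] d
  show ?thesis unfolding e p'_def by simp
qed

lemma pth_empty[simp]: "pth q v {} x = q"
  by (auto simp: pth_def fun_eq_iff vec_eq_iff)

lemma pth_insert:
  assumes "a \<notin> A"
  shows "pth q v (insert a A) x = pth (pth q v {a} x) v A x"
  using assms by (auto simp: pth_def fun_eq_iff vec_eq_iff)

lemma pth_single: "pth q v {(i0,j0)} y = q(i0 := q i0 + (y * v i0 $ j0) *\<^sub>R axis j0 1)"
  by (auto simp: pth_def fun_eq_iff vec_eq_iff axis_def)

lemma pth_Sk: "q \<in> Sk k \<Longrightarrow> \<forall>(i,j)\<in>A. i < k \<Longrightarrow> pth q v A x \<in> Sk k"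
  by (auto simp: Sk_def pth_def vec_eq_iff)

lemma cont_if_const: "continuous_on S h \<Longrightarrow> continuous_on S (\<lambda>x. if P then h x else (0::real))"
  by (cases P) auto

lemma continuous_pth: "continuous_on UNIV (\<lambda>(x::real,y::real). pth (pth q v B y) v A x)"
  unfolding pth_def
  by (intro continuous_on_coordinatewise_then_product)
     (auto intro!: continuous_intros cont_if_const simp: split_beta')

lemma pth_comm: "pth (pth q v B y) v A x = pth (pth q v A x) v B y"
  by (auto simp: pth_def fun_eq_iff vec_eq_iff algebra_simps)

lemma hrd_to_hd: "(f has_real_derivative D) F \<Longrightarrow> (f has_derivative (\<lambda>h. h * D)) F"
proof -
  have "(\<lambda>h. h * D) = (*) D" by (rule ext) (simp add: mult.commute)
  then show "(f has_real_derivative D) F \<Longrightarrow> (f has_derivative (\<lambda>h. h * D)) F"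
    unfolding has_field_derivative_def by simp
qed

lemma hd_to_hrd: "(f has_derivative (\<lambda>h. h * D)) F \<Longrightarrow> (f has_real_derivative D) F"
proof -
  have "(\<lambda>h. h * D) = (*) D" by (rule ext) (simp add: mult.commute)
  then show "(f has_derivative (\<lambda>h. h * D)) F \<Longrightarrow> (f has_real_derivative D) F"
    unfolding has_field_derivative_def by simp
qed

lemma chain_pth:
  fixes f :: vfun
  assumes fin: "finite A" and Ak: "\<forall>(i,j)\<in>A. i < k"
   and pdiff: "\<And>i j p. i < k \<Longrightarrow> (\<lambda>t. f (p(i := p i + t *\<^sub>R axis j 1))) differentiable (at 0)"
   and pcont: "\<And>i j. i < k \<Longrightarrow> continuous_on (Sk k) (pd f i j)"
   and q: "q \<in> Sk k"
  shows "((\<lambda>x. f (pth q v A x)) has_real_derivative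
            (\<Sum>(i,j)\<in>A. v i $ j * pd f i j (pth q v A x0))) (at x0)"
  using fin Ak q
proof (induction A arbitrary: q rule: finite_induct)
  case empty
  then show ?case by simp
next
  case (insert a A)
  obtain i0 j0 where a: "a = (i0, j0)" by (cases a)
  have i0: "i0 < k" using insert.prems a by auto
  have Ak': "\<forall>(i,j)\<in>A. i < k" using insert.prems by auto
  define H where "H x y = f (pth (pth q v {a} y) v A x)" for x y
  define DA where "DA = (\<Sum>(i,j)\<in>A. v i $ j * pd f i j (pth (pth q v {a} x0) v A x0))"
  define c where "c x y = v i0 $ j0 * pd f i0 j0 (pth (pth q v {a} y) v A x)" for x y
  have qa: "pth q v {a} y \<in> Sk k" for y
    using pth_Sk[OF insert.prems(2), of "{a}"] i0 a by auto
  have fx0: "((\<lambda>x. H x x0) has_real_derivative DA) (at x0)"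
    unfolding H_def DA_def using insert.IH[OF Ak' qa] .
  have fx: "((\<lambda>x. H x x0) has_derivative (\<lambda>h. h * DA)) (at x0 within UNIV)"
    using fx0 unfolding has_field_derivative_def by (simp add: mult.commute[of _ DA])
  have fy: "((\<lambda>y. H x y) has_derivative blinfun_apply (blinfun_scaleR_left (c x y))) (at y within UNIV)"
    for x y
  proof -
    define P where "P = pth q v A x"
    have Peq: "pth (pth q v {a} y) v A x = P(i0 := P i0 + (y * v i0 $ j0) *\<^sub>R axis j0 1)" for y
      unfolding P_def by (subst pth_comm) (simp add: a pth_single)
    have Heq: "(\<lambda>y. H x y) = (\<lambda>y. f (P(i0 := P i0 + (y * v i0 $ j0) *\<^sub>R axis j0 1)))"
      unfolding H_def Peq by simp
    have d1: "((\<lambda>s. f (P(i0 := P i0 + s *\<^sub>R axis j0 1))) has_real_derivative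
           pd f i0 j0 (P(i0 := P i0 + (y * v i0 $ j0) *\<^sub>R axis j0 1))) (at (y * v i0 $ j0))"
      by (rule partial_deriv_at[OF pdiff[OF i0]])
    have d2: "((\<lambda>y. y * v i0 $ j0) has_real_derivative v i0 $ j0) (at y)"
      by (auto intro!: derivative_eq_intros)
    have "((\<lambda>y. H x y) has_real_derivative c x y) (at y)"
      unfolding Heq c_def using DERIV_chain2[OF d1 d2]
      by (simp add: Peq mult.commute[of _ "v i0 $ j0"])
    then show ?thesis by (simp add: hrd_to_hd)
  qed
  have cc: "continuous_on UNIV (\<lambda>(x,y). c x y)"
  proof -
    have "continuous_on UNIV (\<lambda>(x,y). pd f i0 j0 (pth (pth q v {a} y) v A x))"
      using continuous_on_compose2[OF pcont[OF i0] continuous_pth[of q v "{a}" A]]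
        pth_Sk[OF qa Ak'] by (auto simp: split_beta')
    then show ?thesis unfolding c_def by (auto intro!: continuous_intros simp: split_beta')
  qed
  have cont: "continuous (at (x0, x0) within UNIV \<times> UNIV) (\<lambda>(x, y). blinfun_scaleR_left (c x y))"
  proof -
    have "continuous_on UNIV (\<lambda>(x, y). blinfun_scaleR_left (c x y))"
      using cc by (auto intro!: continuous_intros simp: split_beta')
    then show ?thesis by (simp add: continuous_on_eq_continuous_within)
  qed
  have J: "((\<lambda>(x, y). H x y) has_derivative (\<lambda>(tx, ty). tx * DA + blinfun_apply (blinfun_scaleR_left (c x0 x0)) ty))
           (at (x0, x0) within UNIV \<times> UNIV)"
    by (rule has_derivative_partialsI[OF fx fy cont]) auto
  have diag: "((\<lambda>x. (x, x)) has_derivative (\<lambda>h. (h, h))) (at x0)"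
    by (auto intro!: derivative_eq_intros)
  from J have J': "((\<lambda>(x, y). H x y) has_derivative (\<lambda>(tx, ty). tx * DA + ty * c x0 x0)) (at (x0, x0))"
    by simp
  have "((\<lambda>x. (\<lambda>(x, y). H x y) (x, x)) has_derivative (\<lambda>h. (\<lambda>(tx, ty). tx * DA + ty * c x0 x0) (h, h))) (at x0)"
    by (rule has_derivative_compose[OF diag J'])
  then have "((\<lambda>x. H x x) has_derivative (\<lambda>h. h * (DA + c x0 x0))) (at x0)"
    by (simp add: algebra_simps)
  then have "((\<lambda>x. H x x) has_real_derivative (DA + c x0 x0)) (at x0)"
    by (rule hd_to_hrd)
  moreover have "(\<lambda>x. H x x) = (\<lambda>x. f (pth q v (insert a A) x))"
    unfolding H_def using pth_insert[OF insert.hyps(2)] by simp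
  moreover have "DA + c x0 x0 = (\<Sum>(i,j)\<in>insert a A. v i $ j * pd f i j (pth q v (insert a A) x0))"
    unfolding DA_def c_def using insert.hyps a pth_insert[OF insert.hyps(2)] by simp
  ultimately show ?case by simp
qed



lemma ray_deriv:
  assumes sm: "smooth_in k f" and p: "p \<in> Sk k"
  shows "((\<lambda>t. f (\<lambda>i. t *\<^sub>R p i)) has_real_derivative
           (\<Sum>i<k. \<Sum>j\<in>UNIV. p i $ j * pd f i j (\<lambda>i. t0 *\<^sub>R p i))) (at t0)"
proof -
  have pdiff: "(\<lambda>t. f (q(i := q i + t *\<^sub>R axis j 1))) differentiable (at 0)" if "i < k" for i j q
  proof -
    have "dirs_below k []" by (simp add: dirs_below_def)
    with sm have "\<forall>i j p. i < k \<longrightarrow> (\<lambda>t. pdl [] f (p(i := p i + t *\<^sub>R axis j 1))) differentiable (at 0)"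
      unfolding smooth_in_def by blast
    then show ?thesis using that by simp
  qed
  have pcont: "continuous_on (Sk k) (pd f i j)" if "i < k" for i j
  proof -
    have "dirs_below k [(i,j)]" using that by (simp add: dirs_below_def)
    with sm have "continuous_on {p. \<forall>i\<ge>k. p i = 0} (pdl [(i,j)] f)"
      unfolding smooth_in_def by blast
    then show ?thesis unfolding Sk_def by simp
  qed
  have pe: "pth (\<lambda>_. 0) p ({..<k} \<times> UNIV) t = (\<lambda>i. t *\<^sub>R p i)" for t
    using p by (auto simp: pth_def Sk_def fun_eq_iff vec_eq_iff)
  have z: "(\<lambda>_. 0) \<in> Sk k" by (simp add: Sk_def)
  have "((\<lambda>x. f (pth (\<lambda>_. 0) p ({..<k} \<times> UNIV) x)) has_real_derivative
            (\<Sum>(i,j)\<in>{..<k} \<times> UNIV. p i $ j * pd f i j (pth (\<lambda>_. 0) p ({..<k} \<times> UNIV) t0))) (at t0)"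
    by (rule chain_pth[OF _ _ pdiff pcont z]) auto
  then show ?thesis unfolding pe by (simp add: sum.cartesian_product)
qed

lemma euler_ray: "euler k f (\<lambda>i. t *\<^sub>R p i) = t * (\<Sum>i<k. \<Sum>j\<in>UNIV. p i $ j * pd f i j (\<lambda>i. t *\<^sub>R p i))"
  by (simp add: euler_def sum_distrib_left mult.assoc)

lemma sq_g_eq: "t^2 * g (t *\<^sub>R P) = (if P \<bullet> P = 0 then t^2 else (1 - exp (- (t^2 * (P \<bullet> P)))) / (P \<bullet> P))"
  by (auto simp: g_def power2_eq_square field_simps)


lemma sq_g_deriv: "((\<lambda>t. t^2 * g (t *\<^sub>R P)) has_real_derivative 2 * t * Cov (t *\<^sub>R P)) (at t)"
proof (cases "P \<bullet> P = 0")
  case True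
  then show ?thesis unfolding sq_g_eq Cov_def
    by (auto intro!: derivative_eq_intros simp: power2_eq_square)
next
  case False
  then show ?thesis unfolding sq_g_eq Cov_def
    by (auto intro!: derivative_eq_intros simp: power2_eq_square)
qed



definition Pof :: "(nat \<Rightarrow> mom) \<Rightarrow> (nat \<Rightarrow> nat) \<Rightarrow> mom" where
  "Pof p \<sigma> = p (\<sigma> 0) + p (\<sigma> 1) + p (\<sigma> 2)"

lemma avg_g_ray: "avg 5 (\<lambda>p. g (p 0 + p 1 + p 2)) (\<lambda>i. t *\<^sub>R p i)
   = (\<Sum>\<sigma>\<in>{\<sigma>. \<sigma> permutes {..<5}}. g (t *\<^sub>R Pof p \<sigma>)) / fact 5"
  by (simp add: avg_def Pof_def scaleR_add_right)

lemma avg_C_ray: "avg 5 (\<lambda>p. Cov (p 0 + p 1 + p 2)) (\<lambda>i. t *\<^sub>R p i)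
   = (\<Sum>\<sigma>\<in>{\<sigma>. \<sigma> permutes {..<5}}. Cov (t *\<^sub>R Pof p \<sigma>)) / fact 5"
  by (simp add: avg_def Pof_def scaleR_add_right)

lemma avg_trunc:
  "avg 5 F p = avg 5 F (\<lambda>i. if i < 5 then p i else 0)" if "\<And>p q. (\<forall>i<5. p i = q i) \<Longrightarrow> F p = F q"
  for F :: vfun
proof -
  have "F (p \<circ> \<sigma>) = F ((\<lambda>i. if i < 5 then p i else 0) \<circ> \<sigma>)" if "\<sigma> permutes {..<5}" for \<sigma>
  proof -
    have "\<forall>i<5. (p \<circ> \<sigma>) i = ((\<lambda>i. if i < 5 then p i else 0) \<circ> \<sigma>) i"
      using permutes_in_image[OF that] by auto
    then show ?thesis by (rule \<open>\<And>p q. (\<forall>i<5. p i = q i) \<Longrightarrow> F p = F q\<close>)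
  qed
  then show ?thesis unfolding avg_def by (intro arg_cong2[where f="(/)"] sum.cong) auto
qed

lemma ode_unique:
  fixes f :: vfun
  assumes sm: "smooth_in 5 f" and dep: "depends_only 5 f"
    and eq: "\<And>p. euler 5 f p + 2 * f p = - 40 * avg 5 (\<lambda>p. Cov (p 0 + p 1 + p 2)) p"
  shows "f p = - 20 * avg 5 (\<lambda>p. g (p 0 + p 1 + p 2)) p"
proof -
  define p' where "p' = (\<lambda>i. if i < 5 then p i else (0::mom))"
  have p'S: "p' \<in> Sk 5" by (simp add: p'_def Sk_def)
  have fp: "f p = f p'" using dep unfolding depends_only_def p'_def by auto
  have ap: "avg 5 (\<lambda>p. g (p 0 + p 1 + p 2)) p = avg 5 (\<lambda>p. g (p 0 + p 1 + p 2)) p'"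
    unfolding p'_def by (rule avg_trunc) simp
  define PS where "PS = {\<sigma>. \<sigma> permutes {..<5::nat}}"
  define F where "F t = f (\<lambda>i. t *\<^sub>R p' i)" for t
  define Fd where "Fd t = (\<Sum>i<5. \<Sum>j\<in>UNIV. p' i $ j * pd f i j (\<lambda>i. t *\<^sub>R p' i))" for t
  define A where "A t = (\<Sum>\<sigma>\<in>PS. Cov (t *\<^sub>R Pof p' \<sigma>)) / fact 5" for t
  define C2 where "C2 t = - 20 * ((\<Sum>\<sigma>\<in>PS. t^2 * g (t *\<^sub>R Pof p' \<sigma>)) / fact 5)" for t
  define D where "D t = t^2 * F t - C2 t" for t
  have dF: "(F has_real_derivative Fd t) (at t)" for t
    unfolding F_def Fd_def by (rule ray_deriv[OF sm p'S])
  have ode: "t * Fd t + 2 * F t = - 40 * A t" for t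
    using eq[of "\<lambda>i. t *\<^sub>R p' i"] unfolding euler_ray avg_C_ray F_def Fd_def A_def PS_def .
  have dC2: "(C2 has_real_derivative - 20 * ((\<Sum>\<sigma>\<in>PS. 2 * t * Cov (t *\<^sub>R Pof p' \<sigma>)) / fact 5)) (at t)" for t
  proof -
    have "((\<lambda>t. \<Sum>\<sigma>\<in>PS. t^2 * g (t *\<^sub>R Pof p' \<sigma>)) has_real_derivative (\<Sum>\<sigma>\<in>PS. 2 * t * Cov (t *\<^sub>R Pof p' \<sigma>))) (at t)"
      by (rule DERIV_sum) (rule sq_g_deriv)
    then show ?thesis unfolding C2_def[abs_def] by (intro DERIV_cmult DERIV_cdivide)
  qed
  have dD: "(D has_real_derivative 0) (at t)" for t
  proof -
    have "(D has_real_derivative (2 * t * F t + t^2 * Fd t - (- 20 * ((\<Sum>\<sigma>\<in>PS. 2 * t * Cov (t *\<^sub>R Pof p' \<sigma>)) / fact 5)))) (at t)"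
      unfolding D_def[abs_def] by (auto intro!: derivative_eq_intros dF dC2 simp: power2_eq_square)
    moreover have "2 * t * F t + t^2 * Fd t - (- 20 * ((\<Sum>\<sigma>\<in>PS. 2 * t * Cov (t *\<^sub>R Pof p' \<sigma>)) / fact 5)) = 0"
    proof -
      have "(\<Sum>\<sigma>\<in>PS. 2 * t * Cov (t *\<^sub>R Pof p' \<sigma>)) = 2 * t * (\<Sum>\<sigma>\<in>PS. Cov (t *\<^sub>R Pof p' \<sigma>))"
        by (simp add: sum_distrib_left)
      then have "2 * t * F t + t^2 * Fd t - (- 20 * ((\<Sum>\<sigma>\<in>PS. 2 * t * Cov (t *\<^sub>R Pof p' \<sigma>)) / fact 5))
          = t * (t * Fd t + 2 * F t) + 40 * t * A t"
        unfolding A_def by (simp add: algebra_simps power2_eq_square)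
      also have "\<dots> = 0" using ode[of t] by (simp add: algebra_simps)
      finally show ?thesis .
    qed
    ultimately show ?thesis by simp
  qed
  have "D 1 = D 0" using DERIV_isconst_all[of D 1 0] dD by blast
  then have "F 1 = C2 1" unfolding D_def C2_def by simp
  then have "f p' = - 20 * avg 5 (\<lambda>p. g (p 0 + p 1 + p 2)) p'"
    using avg_g_ray[of 1 p'] unfolding F_def C2_def PS_def by simp
  then show ?thesis using fp ap by simp
qed



lemma pd_const: "pd (\<lambda>_. c) i j p = 0"
  by (simp add: pd_def)

lemma euler_const: "euler k (\<lambda>_. c) p = 0"
  by (simp add: euler_def pd_const)

lemma sum3: "(\<Sum>i<(3::nat). f i) = f 0 + f 1 + (f 2 :: 'a::comm_monoid_add)"
  by (simp add: numeral_3_eq_3 numeral_2_eq_2 add.assoc)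

lemma avg_zero: "avg k (\<lambda>_. 0) p = 0"
  by (simp add: avg_def)

lemma c63: "(6::nat) choose 3 = 20" by code_simp

lemma beta1_zero:
  assumes S: "system_S V beta" and V12: "\<forall>p. V 1 2 p = 1" and V1n: "\<forall>n p. n > 2 \<longrightarrow> V 1 n p = 0"
  shows "beta 1 = 0"
proof -
  have e: "euler 3 (V 1 2) p + (- 4 + 2 * real 2 + real 1 * beta 1) * V 1 2 p = flow_rhs V beta 1 2 p" for p
  proof -
    have "\<And>r n p. 1 \<le> r \<Longrightarrow> 1 \<le> n \<Longrightarrow> euler (2*n - 1) (V r n) p + (- 4 + 2 * real n + real r * beta 1) * V r n p = flow_rhs V beta r n p"
      using S unfolding system_S_def by blast
    from this[of 1 2 p] show ?thesis by simp
  qed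
  have v: "V 1 2 = (\<lambda>_. 1)" using V12 by auto
  have "flow_rhs V beta 1 2 p = 0" for p
    unfolding flow_rhs_def using V1n by simp
  then show ?thesis using e[of "\<lambda>_. 0"] unfolding v euler_const by simp
qed

lemma ode23:
  assumes S: "system_S V beta" and V12: "\<forall>p. V 1 2 p = 1" and V1n: "\<forall>n p. n > 2 \<longrightarrow> V 1 n p = 0"
    and V24: "\<forall>p. V 2 4 p = 0"
  shows "euler 5 (V 2 3) p + 2 * V 2 3 p = - 40 * avg 5 (\<lambda>p. Cov (p 0 + p 1 + p 2)) p"
proof -
  have b1: "beta 1 = 0" by (rule beta1_zero[OF S V12 V1n])
  have e: "euler (2*3-1) (V 2 3) p + (- 4 + 2 * real 3 + real 2 * beta 1) * V 2 3 p = flow_rhs V beta 2 3 p"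
  proof -
    have "\<And>r n p. 1 \<le> r \<Longrightarrow> 1 \<le> n \<Longrightarrow> euler (2*n - 1) (V r n) p + (- 4 + 2 * real n + real r * beta 1) * V r n p = flow_rhs V beta r n p"
      using S unfolding system_S_def by blast
    from this[of 2 3 p] show ?thesis by simp
  qed
  have s13: "{1..3::nat} = {1,2,3}" by auto
  have V1: "\<And>n p. n \<ge> 2 \<Longrightarrow> V (Suc 0) n p = (if n = 2 then 1 else 0)" using V12 V1n by auto
  have "flow_rhs V beta 2 3 p = - 40 * avg 5 (\<lambda>p. Cov (p 0 + p 1 + p 2)) p"
    unfolding flow_rhs_def s13 using V24
    by (simp add: avg_zero sum3 add.assoc V1 c63)
  then show ?thesis using e b1 by simp
qed



lemma perms5: "{..<5::nat} = insert 4 (insert 3 (insert 2 (insert 1 (insert 0 {}))))"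
  by auto

lemma sum_perms5:
  "(\<Sum>\<sigma>\<in>{\<sigma>. \<sigma> permutes {..<5::nat}}. f \<sigma>) =
   (\<Sum>a\<in>{4,3,2,1,0}. \<Sum>b\<in>{3,2,1,0}. \<Sum>c\<in>{2,1,0}. \<Sum>d\<in>{1,0}. \<Sum>e\<in>{0}.
      f (Transposition.transpose 4 a \<circ> (Transposition.transpose 3 b \<circ> (Transposition.transpose 2 c \<circ> (Transposition.transpose 1 d \<circ> (Transposition.transpose 0 e \<circ> id))))))"
  unfolding perms5
  by (simp add: sum_over_permutations_insert)

lemma g_neg: "g (- q) = g q" by (simp add: g_def)
lemma g_zero: "g 0 = 1" by (simp add: g_def)

lemma avg_special:
  "avg 5 (\<lambda>p. g (p 0 + p 1 + p 2)) (\<lambda>i. if i = 3 then q else if i = 4 then - q else 0) = (4 + 6 * g q) / 10"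
  unfolding avg_def sum_perms5
  by (simp add: Transposition.transpose_def g_neg g_zero fact_numeral)



lemma gauss1:
  assumes a: "a > 0"
  shows "(\<integral>\<^sup>+x. ennreal (exp (- (a * x^2))) \<partial>lborel) = ennreal (sqrt (pi / a))"
proof -
  define s where "s = sqrt (1 / (2 * a))"
  have s: "s > 0" using a by (simp add: s_def)
  have s2: "s^2 = 1 / (2 * a)" using a by (simp add: s_def)
  have eq: "exp (- (a * x^2)) = sqrt (pi / a) * normal_density 0 s x" for x
  proof -
    have "2 * pi * s^2 = pi / a" using a by (simp add: s2 field_simps)
    moreover have "- ((x - 0)^2) / (2 * s^2) = - (a * x^2)" using a by (simp add: s2 field_simps)
    ultimately have "normal_density 0 s x = exp (- (a * x^2)) / sqrt (pi / a)"
      unfolding normal_density_def by simp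
    moreover have "sqrt (pi / a) > 0" using a by simp
    ultimately show ?thesis using a by simp
  qed
  have "(\<integral>\<^sup>+x. ennreal (normal_density 0 s x) \<partial>lborel) = ennreal 1"
    using s by (subst nn_integral_eq_integral) auto
  then have "(\<integral>\<^sup>+x. ennreal (sqrt (pi / a)) * ennreal (normal_density 0 s x) \<partial>lborel) = ennreal (sqrt (pi / a))"
    by (subst nn_integral_cmult) auto
  moreover have "\<And>x. ennreal (sqrt (pi / a) * normal_density 0 s x) = ennreal (sqrt (pi / a)) * ennreal (normal_density 0 s x)"
    using a by (intro ennreal_mult) auto
  ultimately show ?thesis unfolding eq by simp
qed

lemma gauss4:
  assumes a: "a > 0"
  shows "(\<integral>\<^sup>+q. ennreal (exp (- (a * (q \<bullet> q)))) \<partial>(lborel :: (real^4) measure)) = ennreal ((pi / a)^2)"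
proof -
  have e: "ennreal (exp (- (a * (q \<bullet> q)))) = (\<Prod>b\<in>Basis. ennreal (exp (- (a * (q \<bullet> b)^2))))" for q :: "real^4"
  proof -
    have "q \<bullet> q = (\<Sum>b\<in>Basis. (q \<bullet> b)^2)" by (subst euclidean_inner) (simp add: power2_eq_square)
    then have "exp (- (a * (q \<bullet> q))) = (\<Prod>b\<in>Basis. exp (- (a * (q \<bullet> b)^2)))"
      by (simp add: sum_distrib_left exp_sum[symmetric] sum_negf)
    then show ?thesis by (simp add: prod_ennreal)
  qed
  have "(\<integral>\<^sup>+q. (\<Prod>b\<in>Basis. ennreal (exp (- (a * (q \<bullet> b)^2)))) \<partial>(lborel :: (real^4) measure))
      = (\<Prod>b\<in>(Basis :: (real^4) set). (\<integral>\<^sup>+x. ennreal (exp (- (a * x^2))) \<partial>lborel))"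
    by (rule nn_integral_lborel_prod) auto
  also have "\<dots> = (\<Prod>b\<in>(Basis :: (real^4) set). ennreal (sqrt (pi / a)))" using gauss1[OF a] by simp
  also have "\<dots> = ennreal (sqrt (pi / a) ^ 4)" using a by (simp add: ennreal_power)
  also have "sqrt (pi / a) ^ 4 = (pi / a)^2"
  proof -
    have "sqrt (pi / a) ^ 4 = (sqrt (pi / a)^2)^2" by simp
    also have "\<dots> = (pi / a)^2" using a by simp
    finally show ?thesis .
  qed
  finally show ?thesis unfolding e .
qed

lemma g_pointwise:
  fixes q :: mom
  shows "ennreal (Cov q * g q) = (\<integral>\<^sup>+s. ennreal (exp (- ((1 + s) * (q \<bullet> q)))) * indicator {0..1} s \<partial>lborel)"
proof (cases "q \<bullet> q = 0")
  case True
  have "(\<integral>\<^sup>+s. ennreal (exp (- ((1 + s) * (q \<bullet> q)))) * indicator {0..1} s \<partial>lborel) = ennreal ((\<lambda>s::real. s) 1 - (\<lambda>s. s) 0)"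
    by (rule nn_integral_FTC_Icc[where F="\<lambda>s. s" and f="\<lambda>s. exp (- ((1 + s) * (q \<bullet> q)))"])
       (auto simp: True intro!: derivative_eq_intros)
  then show ?thesis by (simp add: True Cov_def g_def)
next
  case False
  define a where "a = q \<bullet> q"
  have a: "a > 0" using False unfolding a_def by (simp add: order_less_le)
  have "(\<integral>\<^sup>+s. ennreal (exp (- ((1 + s) * a))) * indicator {0..1} s \<partial>lborel)
      = ennreal ((\<lambda>s::real. - exp (- ((1 + s) * a)) / a) 1 - (\<lambda>s. - exp (- ((1 + s) * a)) / a) 0)"
    by (rule nn_integral_FTC_Icc) (use a in \<open>auto intro!: derivative_eq_intros simp: field_simps\<close>)
  also have "(\<lambda>s::real. - exp (- ((1 + s) * a)) / a) 1 - (\<lambda>s. - exp (- ((1 + s) * a)) / a) 0 = Cov q * g q"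
  proof -
    have "exp (- ((1 + 1) * a)) = exp (- a) * exp (- a)" by (simp flip: exp_add)
    then show ?thesis using a False unfolding Cov_def g_def a_def[symmetric]
      by (simp add: field_simps)
  qed
  finally show ?thesis unfolding a_def by simp
qed

lemma meas_prod: "(\<lambda>(q::mom, s::real). ennreal (exp (- ((1 + s) * (q \<bullet> q)))) * indicator {0..1} s) \<in> borel_measurable (lborel \<Otimes>\<^sub>M lborel)"
  by measurable

lemma nn_Cov_g: "(\<integral>\<^sup>+q. ennreal (Cov q * g q) \<partial>(lborel :: mom measure)) = ennreal (pi^2 / 2)"
proof -
  have "(\<integral>\<^sup>+q. ennreal (Cov q * g q) \<partial>(lborel :: mom measure))
     = (\<integral>\<^sup>+q. (\<integral>\<^sup>+s. ennreal (exp (- ((1 + s) * (q \<bullet> q)))) * indicator {0..1} s \<partial>lborel) \<partial>(lborel :: mom measure))"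
    by (simp add: g_pointwise)
  also have "\<dots> = (\<integral>\<^sup>+s. (\<integral>\<^sup>+q. ennreal (exp (- ((1 + s) * (q \<bullet> q)))) * indicator {0..1} s \<partial>(lborel :: mom measure)) \<partial>lborel)"
    using lborel_pair.Fubini'[OF meas_prod] by simp
  also have "\<dots> = (\<integral>\<^sup>+s. ennreal ((pi / (1 + s))^2) * indicator {0..1} s \<partial>lborel)"
  proof (intro nn_integral_cong)
    fix s :: real
    show "(\<integral>\<^sup>+q. ennreal (exp (- ((1 + s) * (q \<bullet> q)))) * indicator {0..1} s \<partial>(lborel :: mom measure))
        = ennreal ((pi / (1 + s))^2) * indicator {0..1} s"
    proof (cases "s \<in> {0..1}")
      case True
      then have "1 + s > 0" by auto
      then show ?thesis using True by (simp add: nn_integral_multc gauss4)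
    qed simp
  qed
  also have "\<dots> = ennreal ((\<lambda>s::real. - (pi^2 / (1 + s))) 1 - (\<lambda>s. - (pi^2 / (1 + s))) 0)"
    by (rule nn_integral_FTC_Icc)
       (auto intro!: derivative_eq_intros simp: field_simps power2_eq_square)
  also have "\<dots> = ennreal (pi^2 / 2)" by simp
  finally show ?thesis .
qed

lemma int_Cov_g: "integrable lborel (\<lambda>q::mom. Cov q * g q)" "(\<integral>q. Cov q * g q \<partial>(lborel :: mom measure)) = pi^2 / 2"
proof -
  have m: "(\<lambda>q::mom. Cov q * g q) \<in> borel_measurable lborel"
    unfolding Cov_def g_def by measurable
  have nn: "AE q in lborel. 0 \<le> Cov q * g (q::mom)"
    by (auto simp: Cov_def g_def intro!: divide_nonneg_pos) 
  show i: "integrable lborel (\<lambda>q::mom. Cov q * g q)"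
    using integrableI_nn_integral_finite[OF m nn nn_Cov_g] by auto
  have "ennreal (\<integral>q. Cov q * g q \<partial>(lborel :: mom measure)) = ennreal (pi^2 / 2)"
    using nn_integral_eq_integral[OF i nn] nn_Cov_g by simp
  moreover have "(\<integral>q. Cov q * g q \<partial>(lborel :: mom measure)) \<ge> 0"
    by (rule integral_nonneg_AE[OF nn])
  ultimately show "(\<integral>q. Cov q * g q \<partial>(lborel :: mom measure)) = pi^2 / 2"
    by (simp add: ennreal_inj)
qed

lemma int_Cov: "integrable lborel (\<lambda>q::mom. Cov q)" "(\<integral>q. Cov q \<partial>(lborel :: mom measure)) = pi^2"
proof -
  have m: "(\<lambda>q::mom. Cov q) \<in> borel_measurable lborel"
    unfolding Cov_def by measurable
  have nn: "AE q in lborel. 0 \<le> Cov (q::mom)"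
    by (auto simp: Cov_def)
  have e: "(\<integral>\<^sup>+q. ennreal (Cov q) \<partial>(lborel :: mom measure)) = ennreal (pi^2)"
    using gauss4[of 1] unfolding Cov_def by simp
  show i: "integrable lborel (\<lambda>q::mom. Cov q)"
    using integrableI_nn_integral_finite[OF m nn e] by auto
  have "ennreal (\<integral>q. Cov q \<partial>(lborel :: mom measure)) = ennreal (pi^2)"
    using nn_integral_eq_integral[OF i nn] e by simp
  moreover have "(\<integral>q. Cov q \<partial>(lborel :: mom measure)) \<ge> 0"
    by (rule integral_nonneg_AE[OF nn])
  ultimately show "(\<integral>q. Cov q \<partial>(lborel :: mom measure)) = pi^2"
    by (simp add: ennreal_inj)
qed



lemma avg_zero_pt: "avg k F (\<lambda>_. 0) = F (\<lambda>_. 0)"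
proof -
  have "card {\<sigma>. \<sigma> permutes {..<k}} = fact k" by (rule card_permutations) auto
  then show ?thesis unfolding avg_def by (simp add: comp_def)
qed

lemma sys_inst:
  assumes S: "system_S V beta" and "1 \<le> r" "1 \<le> n"
  shows "euler (2*n - 1) (V r n) p + (- 4 + 2 * real n + real r * beta 1) * V r n p = flow_rhs V beta r n p"
  using assms unfolding system_S_def by blast

lemma mu_val:
  assumes S: "system_S V beta" and V12: "\<forall>p. V 1 2 p = 1" and b1: "beta 1 = 0"
    and V11: "\<forall>p. V 1 1 p = mu + zeta * (p 0 \<bullet> p 0)"
  shows "mu = - 1 / (32 * pi^2)"
proof -
  have e: "euler 1 (V 1 1) (\<lambda>_. 0) + (- 4 + 2 * real 1 + real 1 * beta 1) * V 1 1 (\<lambda>_. 0) = flow_rhs V beta 1 1 (\<lambda>_. 0)"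
    using sys_inst[OF S, of 1 1 "\<lambda>_. 0"] by simp
  have eu: "euler 1 (V 1 1) (\<lambda>_. 0) = 0" by (simp add: euler_def)
  have fr: "flow_rhs V beta 1 1 (\<lambda>_. 0) = pi^2 / (2 * pi)^4"
  proof -
    have "V (Suc 0) (Suc (Suc 0)) p = 1" for p using V12 by (simp add: numeral_2_eq_2)
    then show ?thesis unfolding flow_rhs_def using int_Cov by simp
  qed
  have h1: "- 2 * mu = pi^2 / (2 * pi)^4" using e eu fr b1 V11 by simp
  have h2: "pi^2 / (2 * pi)^4 = 1 / (16 * pi^2)" by (simp add: field_simps eval_nat_numeral)
  have "- 2 * mu = 1 / (16 * pi^2)" using h1 h2 by (simp only:)
  then show ?thesis by (simp add: field_simps)
qed

lemma c41: "(4::nat) choose 1 = 4" by code_simp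
lemma c43: "(4::nat) choose 3 = 4" by code_simp

lemma beta2_val:
  assumes S: "system_S V beta" and V12: "\<forall>p. V 1 2 p = 1" and b1: "beta 1 = 0"
    and V11: "\<forall>p. V 1 1 p = mu + zeta * (p 0 \<bullet> p 0)" and mu: "mu = - 1 / (32 * pi^2)"
    and V23: "\<forall>q. V 2 3 (\<lambda>i. if i = 3 then q else if i = 4 then - q else 0) = - 8 - 12 * g q"
  shows "beta 2 = - 6 / (4 * pi)^2"
proof -
  have e: "euler 3 (V 2 2) (\<lambda>_. 0) + (- 4 + 2 * real 2 + real 2 * beta 1) * V 2 2 (\<lambda>_. 0) = flow_rhs V beta 2 2 (\<lambda>_. 0)"
    using sys_inst[OF S, of 2 2 "\<lambda>_. 0"] by simp
  have eu: "euler 3 (V 2 2) (\<lambda>_. 0) = 0" by (simp add: euler_def)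
  have pe: "(\<lambda>i::nat. if i < 2*2 - 1 then 0 else if i = 2*2 - 1 then q else if i = 2*2 then - q else 0)
      = (\<lambda>i. if i = 3 then q else if i = 4 then - q else (0::mom))" for q
    by (auto simp: fun_eq_iff)
  have ig: "(\<lambda>q::mom. Cov q * V 2 (2+1) (\<lambda>i::nat. if i < 2*2 - 1 then 0 else if i = 2*2 - 1 then q else if i = 2*2 then - q else 0))
      = (\<lambda>q. - (8 * Cov q + 12 * (Cov q * g q)))" 
  proof (rule ext)
    fix q :: mom
    have t: "(2::nat) + 1 = 3" by simp
    have vq: "V 2 (2+1) (\<lambda>i::nat. if i < 2*2 - 1 then 0 else if i = 2*2 - 1 then q else if i = 2*2 then - q else 0) = - 8 - 12 * g q"
      unfolding pe t by (rule V23[rule_format])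
    show "Cov q * V 2 (2+1) (\<lambda>i::nat. if i < 2*2 - 1 then 0 else if i = 2*2 - 1 then q else if i = 2*2 then - q else 0)
      = - (8 * Cov q + 12 * (Cov q * g q))" unfolding vq by (simp add: algebra_simps)
  qed
  have I: "(integral\<^sup>L lborel (\<lambda>q::mom. Cov q * V 2 (2+1) (\<lambda>i::nat. if i < 2*2 - 1 then 0 else if i = 2*2 - 1 then q else if i = 2*2 then - q else 0)))
      = - 14 * pi^2"
  proof -
    have "(\<integral>q. - (8 * Cov q + 12 * (Cov q * g q)) \<partial>(lborel :: mom measure)) = - (8 * pi^2 + 12 * (pi^2 / 2))"
      using int_Cov int_Cov_g by (simp add: integral_add)
    then show ?thesis unfolding ig by simp
  qed
  have sums: "{1..1::nat} = {1}" "{2..2::nat} = {2}" "{1..2::nat} = {1,2}" by auto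
  have V11': "V (Suc 0) (Suc 0) p = mu + zeta * (p 0 \<bullet> p 0)" for p using V11 by simp
  have V12': "V (Suc 0) (Suc (Suc 0)) p = 1" "V (Suc 0) 2 p = 1" for p using V12 by (simp_all add: numeral_2_eq_2)
  have fr: "flow_rhs V beta 2 2 (\<lambda>_. 0) = - beta 2 + (- 14 * pi^2) / (2 * pi)^4 - 16 * mu"
    unfolding flow_rhs_def I sums using V11' V12'
    by (simp add: avg_zero_pt c41 c43 Cov_def)
  have h: "0 = - beta 2 + (- 14 * pi^2) / (2 * pi)^4 - 16 * mu" using e eu fr b1 by simp
  have h2: "pi^2 / (2 * pi)^4 = 1 / (16 * pi^2)" by (simp add: field_simps eval_nat_numeral)
  have "beta 2 = - 14 * (pi^2 / (2 * pi)^4) - 16 * mu" using h by simp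
  also have "\<dots> = - 14 * (1 / (16 * pi^2)) + 16 / (32 * pi^2)" unfolding h2 mu by simp
  also have "\<dots> = - 6 / (4 * pi)^2" by (simp add: field_simps eval_nat_numeral)
  finally show ?thesis .
qed


theorem mainTheorem8:
  fixes V :: "nat \<Rightarrow> nat \<Rightarrow> (nat \<Rightarrow> real^4) \<Rightarrow> real"
    and beta lam :: "nat \<Rightarrow> real"
  assumes "system_S V beta"
    and "props_I_VII V lam"
  shows "(\<forall>p. V 2 3 p = - 20 * avg 5 (\<lambda>p. g (p 0 + p 1 + p 2)) p)
       \<and> (\<forall>q. V 2 3 (\<lambda>i. if i = 3 then q else if i = 4 then - q else 0) = - 8 - 12 * g q)
       \<and> beta 2 = - 6 / (4 * pi)^2"
proof -
  note S = assms(1)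
  note D = assms(2)[unfolded props_I_VII_def]
  note A1 = conjunct1[OF D]
  note A3 = conjunct1[OF conjunct2[OF conjunct2[OF D]]]
  note A4 = conjunct1[OF conjunct2[OF conjunct2[OF conjunct2[OF D]]]]
  note A5 = conjunct2[OF conjunct2[OF conjunct2[OF conjunct2[OF D]]]]
  obtain mu zeta where V11: "\<forall>p. V 1 1 p = mu + zeta * (p 0 \<bullet> p 0)"
    using A3 by blast
  have V12: "\<forall>p. V 1 2 p = 1" by (rule A4)
  have V1n: "\<forall>n p. n > 2 \<longrightarrow> V 1 n p = 0" by (rule A5)
  have o1: "(1::nat) \<le> 2" "(1::nat) \<le> 3" "(1::nat) \<le> 4" by simp_all
  note h23 = A1[rule_format, of 2 3, OF o1(1) o1(2)]
  note h24 = A1[rule_format, of 2 4, OF o1(1) o1(3)]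
  have P23a: "depends_only (2*3-1) (V 2 3)" by (rule conjunct1[OF h23])
  have P23b: "smooth_in (2*3-1) (V 2 3)"
    by (rule conjunct1[OF conjunct2[OF conjunct2[OF conjunct2[OF h23]]]])
  have P23: "depends_only 5 (V 2 3)" "smooth_in 5 (V 2 3)" using P23a P23b by simp_all
  have V24': "(4::nat) > 2 + 1 \<longrightarrow> (\<forall>p. V 2 4 p = 0)"
    by (rule conjunct2[OF conjunct2[OF conjunct2[OF conjunct2[OF conjunct2[OF h24]]]]])
  have V24: "\<forall>p. V 2 4 p = 0" using V24' by simp
  have b1: "beta 1 = 0" by (rule beta1_zero[OF S V12 V1n])
  have c1: "\<forall>p. V 2 3 p = - 20 * avg 5 (\<lambda>p. g (p 0 + p 1 + p 2)) p"
  proof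
    fix p
    show "V 2 3 p = - 20 * avg 5 (\<lambda>p. g (p 0 + p 1 + p 2)) p"
      by (rule ode_unique[OF P23(2) P23(1) ode23[OF S V12 V1n V24]])
  qed
  have c2: "\<forall>q. V 2 3 (\<lambda>i. if i = 3 then q else if i = 4 then - q else 0) = - 8 - 12 * g q"
  proof
    fix q
    show "V 2 3 (\<lambda>i. if i = 3 then q else if i = 4 then - q else 0) = - 8 - 12 * g q"
      using c1 avg_special[of q] by simp
  qed
  have mu: "mu = - 1 / (32 * pi^2)" by (rule mu_val[OF S V12 b1 V11])
  have c3: "beta 2 = - 6 / (4 * pi)^2" by (rule beta2_val[OF S V12 b1 V11 mu c2])
  show ?thesis using c1 c2 c3 by blast
qed

end
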